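(* Let $X(\mathbb{R}^n)$ be a Banach function space with absolutely continuous norm. Then $X(\mathbb{R}^n)$ has the bounded $L^2$-approximation property.
   Context: Banach function spaces: let $\mathfrak{M}^+(\mathbb{R}^n)$ be the set of measurable functions with values in $[0,\infty]$. A Banach function norm $\rho:\mathfrak{M}^+\to[0,\infty]$ satisfies, for all $f,g,f_j\in\mathfrak{M}^+$, $a\ge0$, measurable $E$: (A1) $\rho(f)=0\iff f=0$ a.e., $\rho(af)=a\rho(f)$, $\rho(f+g)\le\rho(f)+\rho(g)$; (A2) $0\le g\le f$ a.e. implies $\rho(g)\le\rho(f)$; (A3) $0\le f_j\uparrow f$ a.e. implies $\rho(f_j)\uparrow\rho(f)$; (A4) $|E|<\infty$ implies $\rho(\chi_E)<\infty$; (A5) $|E|<\infty$ implies $\int_Ef\le C_E\rho(f)$ with $C_E$ independent of $f$. $X(\mathbb{R}^n)$ is the set of measurable complex $f$ with $\rho(|f|)<\infty$, $\|f\|_X=\rho(|f|)$. $X$ has absolutely continuous norm if for every $f\in X$ and every sequence of measurable sets $E_j$ with $\chi_{E_j}\to0$ a.e., $\|f\chi_{E_j}\|_X\to0$. Bounded $L^2$-approximation property: for every $u\in L^2(\mathbb{R}^n)\cap X(\mathbb{R}^n)$ there is a sequence $u_j\in C_0^\infty(\mathbb{R}^n)$ with $\|u-u_j\|_{L^2(\mathbb{R}^n)}\to0$ and $\limsup_j\|u_j\|_X\le\|u\|_X$. *)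

theory Defs
  imports "HOL-Analysis.Analysis" "HOL-Library.Liminf_Limsup"
begin

text \<open>Functions on R^n are modelled on an arbitrary Euclidean space 'a (n = DIM('a)),
  with Lebesgue measure. The class M^+ consists of Lebesgue measurable functions
  with values in [0,\<infinity>], i.e. ennreal-valued.\<close>

definition banach_function_norm :: "(('a::euclidean_space \<Rightarrow> ennreal) \<Rightarrow> ennreal) \<Rightarrow> bool" where
  "banach_function_norm \<rho> \<longleftrightarrow>
    \<comment> \<open>(A1)\<close>
    (\<forall>f \<in> borel_measurable lebesgue. \<rho> f = 0 \<longleftrightarrow> (AE x in lebesgue. f x = 0)) \<and>
    (\<forall>f \<in> borel_measurable lebesgue. \<forall>a::real. a \<ge> 0 \<longrightarrow>
        \<rho> (\<lambda>x. ennreal a * f x) = ennreal a * \<rho> f) \<and>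
    (\<forall>f \<in> borel_measurable lebesgue. \<forall>g \<in> borel_measurable lebesgue.
        \<rho> (\<lambda>x. f x + g x) \<le> \<rho> f + \<rho> g) \<and>
    \<comment> \<open>(A2)\<close>
    (\<forall>f \<in> borel_measurable lebesgue. \<forall>g \<in> borel_measurable lebesgue.
        (AE x in lebesgue. g x \<le> f x) \<longrightarrow> \<rho> g \<le> \<rho> f) \<and>
    \<comment> \<open>(A3)\<close>
    (\<forall>f \<in> borel_measurable lebesgue. \<forall>F :: nat \<Rightarrow> 'a \<Rightarrow> ennreal.
        (\<forall>j. F j \<in> borel_measurable lebesgue) \<longrightarrow>
        (AE x in lebesgue. incseq (\<lambda>j. F j x) \<and> (\<lambda>j. F j x) \<longlonglongrightarrow> f x) \<longrightarrow>
        incseq (\<lambda>j. \<rho> (F j)) \<and> (\<lambda>j. \<rho> (F j)) \<longlonglongrightarrow> \<rho> f) \<and>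
    \<comment> \<open>(A4)\<close>
    (\<forall>E \<in> sets lebesgue. emeasure lebesgue E < \<infinity> \<longrightarrow> \<rho> (indicator E) < \<infinity>) \<and>
    \<comment> \<open>(A5)\<close>
    (\<forall>E \<in> sets lebesgue. emeasure lebesgue E < \<infinity> \<longrightarrow>
        (\<exists>C::real. \<forall>f \<in> borel_measurable lebesgue.
           (\<integral>\<^sup>+ x \<in> E. f x \<partial>lebesgue) \<le> ennreal C * \<rho> f))"

definition in_BFS :: "(('a::euclidean_space \<Rightarrow> ennreal) \<Rightarrow> ennreal) \<Rightarrow> ('a \<Rightarrow> complex) \<Rightarrow> bool" where
  "in_BFS \<rho> f \<longleftrightarrow> f \<in> borel_measurable lebesgue \<and> \<rho> (\<lambda>x. ennreal (cmod (f x))) < \<infinity>"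

definition BFS_norm :: "(('a::euclidean_space \<Rightarrow> ennreal) \<Rightarrow> ennreal) \<Rightarrow> ('a \<Rightarrow> complex) \<Rightarrow> ennreal" where
  "BFS_norm \<rho> f = \<rho> (\<lambda>x. ennreal (cmod (f x)))"

definition abs_cont_norm :: "(('a::euclidean_space \<Rightarrow> ennreal) \<Rightarrow> ennreal) \<Rightarrow> bool" where
  "abs_cont_norm \<rho> \<longleftrightarrow>
    (\<forall>f E. in_BFS \<rho> f \<longrightarrow> (\<forall>j. E j \<in> sets lebesgue) \<longrightarrow>
       (AE x in lebesgue. (\<lambda>j. indicator (E j) x :: real) \<longlonglongrightarrow> 0) \<longrightarrow>
       (\<lambda>j. BFS_norm \<rho> (\<lambda>x. f x * indicator (E (j::nat)) x)) \<longlonglongrightarrow> 0)"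

definition in_L2 :: "('a::euclidean_space \<Rightarrow> complex) \<Rightarrow> bool" where
  "in_L2 f \<longleftrightarrow> f \<in> borel_measurable lebesgue \<and> integrable lebesgue (\<lambda>x. (cmod (f x))\<^sup>2)"

definition L2_norm :: "('a::euclidean_space \<Rightarrow> complex) \<Rightarrow> real" where
  "L2_norm f = sqrt (\<integral> x. (cmod (f x))\<^sup>2 \<partial>lebesgue)"

text \<open>C^\<infinity>: partial derivatives of all orders exist and are continuous.\<close>
coinductive smooth_fn :: "('a::euclidean_space \<Rightarrow> complex) \<Rightarrow> bool" where
  "continuous_on UNIV f \<Longrightarrow>
   (\<forall>i\<in>Basis. \<exists>g. smooth_fn g \<and> (\<forall>x. ((\<lambda>t. f (x + t *\<^sub>R i)) has_vector_derivative g x) (at 0)))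
   \<Longrightarrow> smooth_fn f"

definition C0_inf :: "('a::euclidean_space \<Rightarrow> complex) \<Rightarrow> bool" where
  "C0_inf f \<longleftrightarrow> smooth_fn f \<and> compact (closure {x. f x \<noteq> 0})"

definition bounded_L2_approx :: "(('a::euclidean_space \<Rightarrow> ennreal) \<Rightarrow> ennreal) \<Rightarrow> bool" where
  "bounded_L2_approx \<rho> \<longleftrightarrow>
    (\<forall>u. in_L2 u \<and> in_BFS \<rho> u \<longrightarrow>
      (\<exists>U :: nat \<Rightarrow> 'a \<Rightarrow> complex. (\<forall>j. C0_inf (U j)) \<and>
         (\<lambda>j. L2_norm (\<lambda>x. u x - U j x)) \<longlonglongrightarrow> 0 \<and>
         limsup (\<lambda>j. BFS_norm \<rho> (U j)) \<le> BFS_norm \<rho> u))"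

end

theory Submission
  imports Defs "HOL-Computational_Algebra.Polynomial"
begin


coinductive smooth1 :: "(real \<Rightarrow> real) \<Rightarrow> bool" where
  "smooth1 g \<Longrightarrow> (\<forall>t. (f has_real_derivative g t) (at t)) \<Longrightarrow> smooth1 f"

definition hP :: "real poly \<Rightarrow> real \<Rightarrow> real" where
  "hP P t = (if t > 0 then poly P (inverse t) * exp (- inverse t) else 0)"

definition DP :: "real poly \<Rightarrow> real poly" where
  "DP P = [:0,0,1:] * (P - pderiv P)"

lemma poly_exp_lim: fixes P :: "real poly" shows "((\<lambda>y. poly P y * exp (-y)) \<longlongrightarrow> 0) at_top"
proof -
  have eq: "poly P y * exp (-y::real) = (\<Sum>i\<le>degree P. coeff P i * (y ^ i / exp y))" for y
    by (simp add: poly_altdef sum_distrib_right exp_minus divide_inverse mult.assoc)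
  have "((\<lambda>y. \<Sum>i\<le>degree P. coeff P i * (y ^ i / exp y)) \<longlongrightarrow> (\<Sum>i\<le>degree P. coeff P i * 0)) at_top"
    by (intro tendsto_sum tendsto_mult tendsto_const tendsto_power_div_exp_0)
  then show ?thesis by (simp add: eq)
qed

lemma hP_deriv0: "(hP P has_real_derivative 0) (at 0)"
proof -
  have "((\<lambda>y. (hP P y - hP P 0) / (y - 0)) \<longlongrightarrow> 0) (at 0)"
  proof (rule filterlim_split_at)
    show "((\<lambda>y. (hP P y - hP P 0) / (y - 0)) \<longlongrightarrow> 0) (at_left 0)"
    proof (rule Lim_transform_eventually[OF tendsto_const])
      show "\<forall>\<^sub>F y in at_left 0. 0 = (hP P y - hP P 0) / (y - 0)"
        by (rule eventually_at_leftI[of "-1"]) (auto simp: hP_def)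
    qed
    have L: "((\<lambda>y. poly ([:0,1:] * P) (inverse y) * exp (- inverse y)) \<longlongrightarrow> 0) (at_right 0)"
      by (rule filterlim_compose[OF poly_exp_lim filterlim_inverse_at_top_right])
    show "((\<lambda>y. (hP P y - hP P 0) / (y - 0)) \<longlongrightarrow> 0) (at_right 0)"
    proof (rule Lim_transform_eventually[OF L])
      show "\<forall>\<^sub>F y in at_right 0. poly ([:0,1:] * P) (inverse y) * exp (- inverse y) = (hP P y - hP P 0) / (y - 0)"
        by (rule eventually_at_rightI[of _ "1"]) (auto simp: hP_def field_simps)
    qed
  qed
  then show ?thesis by (simp add: has_field_derivative_iff)
qed

lemma hP_deriv_pos:
  assumes "t > 0"
  shows "(hP P has_real_derivative hP (DP P) t) (at t)"
proof -
  have "((\<lambda>t. poly P (inverse t) * exp (- inverse t)) has_real_derivative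
      (poly (pderiv P) (inverse t) * (- inverse (t^2)) * exp (- inverse t) +
       poly P (inverse t) * (exp (- inverse t) * inverse (t^2)))) (at t)"
    using assms
    by (auto intro!: derivative_eq_intros DERIV_chain2[OF poly_DERIV] simp: power2_eq_square field_simps)
  moreover have "poly (pderiv P) (inverse t) * (- inverse (t^2)) * exp (- inverse t) +
       poly P (inverse t) * (exp (- inverse t) * inverse (t^2)) = hP (DP P) t"
    using assms by (simp add: hP_def DP_def algebra_simps power2_eq_square)
  ultimately have d: "((\<lambda>t. poly P (inverse t) * exp (- inverse t)) has_real_derivative hP (DP P) t) (at t)"
    by simp
  show ?thesis
    by (rule has_field_derivative_transform_within_open[OF d, of "{0<..}"]) (use assms in \<open>auto simp: hP_def\<close>)
qed

lemma hP_deriv_neg: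
  assumes "t < 0"
  shows "(hP P has_real_derivative hP (DP P) t) (at t)"
proof -
  have d: "((\<lambda>t. 0) has_real_derivative hP (DP P) t) (at t)"
    using assms by (simp add: hP_def)
  show ?thesis
    by (rule has_field_derivative_transform_within_open[OF d, of "{..<0}"]) (use assms in \<open>auto simp: hP_def\<close>)
qed

lemma hP_deriv: "(hP P has_real_derivative hP (DP P) t) (at t)"
proof -
  consider "t > 0" | "t < 0" | "t = 0" by linarith
  then show ?thesis
  proof cases
    case 3 then show ?thesis using hP_deriv0[of P] by (simp add: hP_def)
  qed (auto intro: hP_deriv_pos hP_deriv_neg)
qed

lemma smooth1_hP: "smooth1 (hP P)"
proof -
  have "\<exists>P. f = hP P \<Longrightarrow> smooth1 f" for f
  proof (coinduction arbitrary: f rule: smooth1.coinduct)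
    case (smooth1 f)
    then obtain P where "f = hP P" by blast
    then show ?case using hP_deriv by (intro exI[of _ "hP (DP P)"] exI[of _ f]) auto
  qed
  then show ?thesis by blast
qed

lemma hP1_pos: "t > 0 \<Longrightarrow> hP 1 t > 0" and hP1_le1: "hP 1 t \<le> 1" and hP1_nonneg: "hP 1 t \<ge> 0"
  by (auto simp: hP_def)



inductive sreal :: "('a::euclidean_space \<Rightarrow> real) \<Rightarrow> bool" where
  sconst: "sreal (\<lambda>x. c)"
| slin: "bounded_linear l \<Longrightarrow> sreal l"
| sinner: "sreal (\<lambda>x. inner x x)"
| sadd: "sreal f \<Longrightarrow> sreal g \<Longrightarrow> sreal (\<lambda>x. f x + g x)"
| smult: "sreal f \<Longrightarrow> sreal g \<Longrightarrow> sreal (\<lambda>x. f x * g x)"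
| scomp: "smooth1 \<phi> \<Longrightarrow> sreal f \<Longrightarrow> sreal (\<lambda>x. \<phi> (f x))"

lemma smooth1_cont: "smooth1 \<phi> \<Longrightarrow> continuous_on UNIV \<phi>"
  by (erule smooth1.cases) (auto intro!: continuous_at_imp_continuous_on DERIV_isCont)

lemma sreal_cont: "sreal f \<Longrightarrow> continuous_on UNIV f"
proof (induction rule: sreal.induct)
  case (slin l) then show ?case by (simp add: linear_continuous_on)
next
  case (scomp \<phi> f) then show ?case
    using smooth1_cont continuous_on_compose2[of UNIV \<phi> UNIV f] by auto
qed (auto intro!: continuous_intros)

lemma sreal_deriv:
  assumes "sreal f"
  shows "\<exists>g. sreal g \<and> (\<forall>x. ((\<lambda>t. f (x + t *\<^sub>R i)) has_real_derivative g x) (at 0))"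
  using assms
proof (induction rule: sreal.induct)
  case (sconst c) then show ?case by (intro exI[of _ "\<lambda>x. 0"]) (auto intro: sreal.intros)
next
  case (slin l)
  have "((\<lambda>t. l (x + t *\<^sub>R i)) has_real_derivative l i) (at 0)" for x
  proof -
    have e: "(\<lambda>t. l (x + t *\<^sub>R i)) = (\<lambda>t. l x + t * l i)"
      using slin by (auto simp: linear_simps)
    show ?thesis unfolding e by (auto intro!: derivative_eq_intros)
  qed
  then show ?case by (intro exI[of _ "\<lambda>x. l i"]) (auto intro: sreal.intros)
next
  case sinner
  have "((\<lambda>t. inner (x + t *\<^sub>R i) (x + t *\<^sub>R i)) has_real_derivative 2 * inner x i) (at 0)" for x
  proof -
    have e: "(\<lambda>t. inner (x + t *\<^sub>R i) (x + t *\<^sub>R i)) = (\<lambda>t. inner x x + 2 * t * inner x i + t * t * inner i i)"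
      by (simp add: inner_add_left inner_add_right algebra_simps inner_commute[of i x])
    show ?thesis unfolding e by (auto intro!: derivative_eq_intros)
  qed
  moreover have "sreal (\<lambda>x. 2 * inner x i)"
    by (intro slin bounded_linear_const_mult bounded_linear_inner_left)
  ultimately show ?case by (intro exI[of _ "\<lambda>x. 2 * inner x i"] conjI allI)
next
  case (sadd f g)
  then obtain f' g' where "sreal f'" "sreal g'"
    "\<And>x. ((\<lambda>t. f (x + t *\<^sub>R i)) has_real_derivative f' x) (at 0)"
    "\<And>x. ((\<lambda>t. g (x + t *\<^sub>R i)) has_real_derivative g' x) (at 0)" by blast
  then show ?case
    by (intro exI[of _ "\<lambda>x. f' x + g' x"] conjI allI sreal.sadd DERIV_add) auto
next
  case (smult f g)
  then obtain f' g' where "sreal f'" "sreal g'"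
    and d: "\<And>x. ((\<lambda>t. f (x + t *\<^sub>R i)) has_real_derivative f' x) (at 0)"
    "\<And>x. ((\<lambda>t. g (x + t *\<^sub>R i)) has_real_derivative g' x) (at 0)" by blast
  have "((\<lambda>t. f (x + t *\<^sub>R i) * g (x + t *\<^sub>R i)) has_real_derivative f' x * g x + g' x * f x) (at 0)" for x
    using DERIV_mult[OF d(1)[of x] d(2)[of x]] by simp
  then show ?case using \<open>sreal f\<close> \<open>sreal g\<close> \<open>sreal f'\<close> \<open>sreal g'\<close>
    by (intro exI[of _ "\<lambda>x. f' x * g x + g' x * f x"] conjI sreal.sadd sreal.smult[of f' g] sreal.smult[of g' f]) auto
next
  case (scomp \<phi> f)
  obtain \<phi>' where s': "smooth1 \<phi>'" and d\<phi>: "\<And>t. (\<phi> has_real_derivative \<phi>' t) (at t)"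
    using scomp(1) by (auto elim: smooth1.cases)
  obtain f' where "sreal f'" and d: "\<And>x. ((\<lambda>t. f (x + t *\<^sub>R i)) has_real_derivative f' x) (at 0)"
    using scomp by blast
  have "((\<lambda>t. \<phi> (f (x + t *\<^sub>R i))) has_real_derivative \<phi>' (f x) * f' x) (at 0)" for x
    using DERIV_chain2[OF d\<phi> d[of x]] by simp
  then show ?case using s' \<open>sreal f\<close> \<open>sreal f'\<close>
    by (intro exI[of _ "\<lambda>x. \<phi>' (f x) * f' x"] conjI sreal.smult[of "\<lambda>x. \<phi>' (f x)" f'] sreal.scomp[of \<phi>' f]) auto
qed

lemma smooth_fn_sreal:
  assumes "sreal f" "sreal g"
  shows "smooth_fn (\<lambda>x. of_real (f x) + \<i> * of_real (g x))"
proof -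
  have "\<exists>f g. F = (\<lambda>x. of_real (f x) + \<i> * of_real (g x)) \<and> sreal f \<and> sreal g \<Longrightarrow> smooth_fn F" for F :: "'a \<Rightarrow> complex"
  proof (coinduction arbitrary: F rule: smooth_fn.coinduct)
    case (smooth_fn F)
    then obtain f g where F: "F = (\<lambda>x. of_real (f x) + \<i> * of_real (g x))" and fg: "sreal f" "sreal g" by blast
    have C: "continuous_on UNIV F"
      unfolding F using sreal_cont[OF fg(1)] sreal_cont[OF fg(2)] by (auto intro!: continuous_intros)
    have D: "\<exists>G. ((\<exists>H. G = H \<and> (\<exists>f g. H = (\<lambda>x. of_real (f x) + \<i> * of_real (g x)) \<and> sreal f \<and> sreal g)) \<or> smooth_fn G) \<and>
         (\<forall>x. ((\<lambda>t. F (x + t *\<^sub>R i)) has_vector_derivative G x) (at 0))" for i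
    proof -
      obtain f' where f': "sreal f'" "\<And>x. ((\<lambda>t. f (x + t *\<^sub>R i)) has_real_derivative f' x) (at 0)"
        using sreal_deriv[OF fg(1)] by blast
      obtain g' where g': "sreal g'" "\<And>x. ((\<lambda>t. g (x + t *\<^sub>R i)) has_real_derivative g' x) (at 0)"
        using sreal_deriv[OF fg(2)] by blast
      have "((\<lambda>t. F (x + t *\<^sub>R i)) has_vector_derivative (of_real (f' x) + \<i> * of_real (g' x))) (at 0)" for x
        unfolding F
        by (intro has_vector_derivative_add has_vector_derivative_of_real f' g' has_vector_derivative_mult_right)
      then show ?thesis using f' g'
        by (intro exI[of _ "\<lambda>x. of_real (f' x) + \<i> * of_real (g' x)"] conjI disjI1 refl exI[of _ f'] exI[of _ g'] allI)
    qed
    show ?case by (intro exI[of _ F] conjI refl ballI C D)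
  qed
  then show ?thesis using assms by blast
qed



lemma rpf_sreal: "real_polynomial_function f \<Longrightarrow> sreal f"
  by (induction rule: real_polynomial_function.induct) (auto intro: sreal.intros)

lemma smooth_approx:
  fixes c :: "'a::euclidean_space \<Rightarrow> complex"
  assumes cc: "continuous_on UNIV c" and r0: "0 < r" and rR: "r < R" and c0: "\<And>x. r \<le> norm x \<Longrightarrow> c x = 0"
    and d: "\<delta> > 0"
  shows "\<exists>s. C0_inf s \<and> (\<forall>x. cmod (s x - c x) \<le> \<delta>) \<and> (\<forall>x. R \<le> norm x \<longrightarrow> s x = 0)"
proof -
  define \<psi> where "\<psi> x = hP 1 (R\<^sup>2 + (-1) * inner x x)" for x :: 'a
  have s\<psi>: "sreal \<psi>"
  proof -
    have "sreal (\<lambda>x::'a. (-1) * inner x x)" by (rule sreal.smult[OF sreal.sconst sreal.sinner])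
    then have "sreal (\<lambda>x::'a. R\<^sup>2 + (-1) * inner x x)" by (rule sreal.sadd[OF sreal.sconst])
    then show ?thesis unfolding \<psi>_def by (rule sreal.scomp[OF smooth1_hP])
  qed
  have c\<psi>: "continuous_on UNIV \<psi>" by (rule sreal_cont[OF s\<psi>])
  have Rpos: "R > 0" using r0 rR by linarith
  have \<psi>pos: "\<psi> x > 0" if "norm x < R" for x
  proof -
    have "norm x ^ 2 < R ^ 2" using that by (intro power_strict_mono) auto
    then show ?thesis unfolding \<psi>_def by (intro hP1_pos) (simp add: power2_norm_eq_inner)
  qed
  have \<psi>zero: "\<psi> x = 0" if "R \<le> norm x" for x
  proof -
    have "R ^ 2 \<le> norm x ^ 2" using that Rpos by (intro power_mono) auto
    then show ?thesis unfolding \<psi>_def by (simp add: hP_def power2_norm_eq_inner)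
  qed
  have \<psi>le: "\<psi> x \<le> 1" "\<psi> x \<ge> 0" for x unfolding \<psi>_def by (rule hP1_le1, rule hP1_nonneg)
  define q where "q x = c x / of_real (\<psi> x)" for x
  have cq: "continuous_on UNIV q"
  proof -
    have U: "UNIV = ball 0 R \<union> (- cball 0 r)" using rR by auto
    have nz: "\<forall>x\<in>ball 0 R. complex_of_real (\<psi> x) \<noteq> 0"
    proof
      fix x :: 'a assume "x \<in> ball 0 R"
      then have "\<psi> x > 0" by (intro \<psi>pos) auto
      then show "complex_of_real (\<psi> x) \<noteq> 0" by simp
    qed
    have 1: "continuous_on (ball 0 R) q"
      unfolding q_def using nz
      by (intro continuous_on_divide continuous_on_subset[OF cc] continuous_on_of_real
          continuous_on_subset[OF c\<psi>]) auto
    have 2: "continuous_on (- cball 0 r) q"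
    proof (rule continuous_on_cong[THEN iffD2, OF refl _ continuous_on_const[of _ 0]])
      show "\<And>x. x \<in> - cball 0 r \<Longrightarrow> q x = 0" unfolding q_def using c0 by auto
    qed
    show ?thesis by (subst U, rule continuous_on_open_Un) (use 1 2 in auto)
  qed
  obtain p where pp: "polynomial_function p" and pq: "\<And>x. x \<in> cball 0 R \<Longrightarrow> norm (q x - p x) < \<delta>"
    using Stone_Weierstrass_polynomial_function[OF compact_cball[of 0 R] continuous_on_subset[OF cq] d]
    by auto
  define s where "s x = of_real (\<psi> x * Re (p x)) + \<i> * of_real (\<psi> x * Im (p x))" for x
  have s_eq: "s x = of_real (\<psi> x) * p x" for x
    unfolding s_def by (subst (3) complex_eq) (simp add: algebra_simps)
  have rRe: "real_polynomial_function (\<lambda>x. Re (p x))" and rIm: "real_polynomial_function (\<lambda>x. Im (p x))"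
    using pp bounded_linear_Re bounded_linear_Im unfolding polynomial_function_def o_def by blast+
  have sm: "smooth_fn s"
    unfolding s_def
    by (rule smooth_fn_sreal[OF sreal.smult[OF s\<psi> rpf_sreal[OF rRe]] sreal.smult[OF s\<psi> rpf_sreal[OF rIm]]])
  have sz: "s x = 0" if "R \<le> norm x" for x using \<psi>zero[OF that] by (simp add: s_eq)
  have supp: "compact (closure {x. s x \<noteq> 0})"
  proof -
    have "{x. s x \<noteq> 0} \<subseteq> cball 0 R" using sz by (force simp: not_le)
    then have "closure {x. s x \<noteq> 0} \<subseteq> cball 0 R" by (intro closure_minimal) auto
    then show ?thesis by (meson bounded_cball bounded_subset closed_closure compact_eq_bounded_closed)
  qed
  have bound: "cmod (s x - c x) \<le> \<delta>" for x
  proof (cases "norm x < R")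
    case True
    have "s x - c x = of_real (\<psi> x) * (p x - q x)"
      using \<psi>pos[OF True] by (simp add: s_eq q_def algebra_simps)
    then have "cmod (s x - c x) = \<psi> x * cmod (q x - p x)"
      using \<psi>le(2)[of x] by (simp add: norm_mult norm_minus_commute)
    also have "\<dots> \<le> 1 * \<delta>"
      using \<psi>le[of x] pq[of x] True by (intro mult_mono) auto
    finally show ?thesis by simp
  next
    case False
    then show ?thesis using sz[of x] c0[of x] rR d by auto
  qed
  show ?thesis using sm supp bound sz unfolding C0_inf_def by blast
qed



lemma cont_meas: "continuous_on UNIV f \<Longrightarrow> (f::'a::euclidean_space \<Rightarrow> 'b::euclidean_space) \<in> borel_measurable lebesgue"
  using continuous_imp_measurable_on_sets_lebesgue[of UNIV f] by simp

lemma nnorm_meas[measurable]: "h \<in> borel_measurable lebesgue \<Longrightarrow> (\<lambda>x. ennreal (cmod (h x))) \<in> borel_measurable lebesgue"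
  by measurable

lemma id_meas_leb[measurable]: "(\<lambda>x. x) \<in> borel_measurable lebesgue"
  using id_borel_measurable_lebesgue by (simp add: id_def)

lemma ennreal_tendsto0I:
  assumes "\<And>e::real. e > 0 \<Longrightarrow> eventually (\<lambda>n. f n \<le> ennreal e) F"
  shows "(f \<longlongrightarrow> (0::ennreal)) F"
proof (rule order_tendstoI)
  fix y :: ennreal assume "y < 0" then show "eventually (\<lambda>n. y < f n) F" by simp
next
  fix y :: ennreal assume "0 < y"
  then obtain z where z: "0 < z" "z < y" using dense by blast
  then have "z \<noteq> \<infinity>" using top.not_eq_extremum by fastforce
  then obtain e where e: "z = ennreal e" "e \<ge> 0" by (cases z) auto
  then have "e > 0" using z by auto
  then show "eventually (\<lambda>n. f n < y) F"
    using assms[of e] z e by (auto elim: eventually_mono)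
qed

context
  fixes \<rho> :: "('a::euclidean_space \<Rightarrow> ennreal) \<Rightarrow> ennreal"
  assumes bfn: "banach_function_norm \<rho>"
begin

lemma rho_mono:
  "f \<in> borel_measurable lebesgue \<Longrightarrow> g \<in> borel_measurable lebesgue \<Longrightarrow> (\<And>x. g x \<le> f x) \<Longrightarrow> \<rho> g \<le> \<rho> f"
  using bfn unfolding banach_function_norm_def by (auto intro: AE_I2)

lemma rho_add:
  "f \<in> borel_measurable lebesgue \<Longrightarrow> g \<in> borel_measurable lebesgue \<Longrightarrow> \<rho> (\<lambda>x. f x + g x) \<le> \<rho> f + \<rho> g"
  using bfn unfolding banach_function_norm_def by auto

lemma rho_scale:
  "f \<in> borel_measurable lebesgue \<Longrightarrow> a \<ge> 0 \<Longrightarrow> \<rho> (\<lambda>x. ennreal a * f x) = ennreal a * \<rho> f"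
  using bfn unfolding banach_function_norm_def by auto

lemma rho_ind: "S \<in> sets lebesgue \<Longrightarrow> emeasure lebesgue S < \<infinity> \<Longrightarrow> \<rho> (indicator S) < \<infinity>"
  using bfn unfolding banach_function_norm_def by auto

lemma BFS_tri:
  assumes "h1 \<in> borel_measurable lebesgue" "h2 \<in> borel_measurable lebesgue"
  shows "BFS_norm \<rho> (\<lambda>x. h1 x + h2 x) \<le> BFS_norm \<rho> h1 + BFS_norm \<rho> h2"
proof -
  have "BFS_norm \<rho> (\<lambda>x. h1 x + h2 x) \<le> \<rho> (\<lambda>x. ennreal (cmod (h1 x)) + ennreal (cmod (h2 x)))"
    unfolding BFS_norm_def
  proof (rule rho_mono)
    fix x
    show "ennreal (cmod (h1 x + h2 x)) \<le> ennreal (cmod (h1 x)) + ennreal (cmod (h2 x))"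
      by (simp add: ennreal_plus[symmetric] del: ennreal_plus) (intro ennreal_leI norm_triangle_ineq)
  qed (use assms in measurable)
  also have "\<dots> \<le> BFS_norm \<rho> h1 + BFS_norm \<rho> h2"
    unfolding BFS_norm_def by (rule rho_add) (use assms in measurable)
  finally show ?thesis .
qed

end

lemma X_dom:
  fixes \<rho> :: "('a::euclidean_space \<Rightarrow> ennreal) \<Rightarrow> ennreal"
  assumes bfn: "banach_function_norm \<rho>" and ac: "abs_cont_norm \<rho>"
    and hm: "\<And>n. h n \<in> borel_measurable lebesgue"
    and K: "K \<in> sets lebesgue" "emeasure lebesgue K < \<infinity>" and B: "B \<ge> 0"
    and hb: "\<And>n x. cmod (h n x) \<le> B * indicator K x"
    and hl: "AE x in lebesgue. (\<lambda>n. h n x) \<longlonglongrightarrow> 0"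
  shows "(\<lambda>n. BFS_norm \<rho> (h n)) \<longlonglongrightarrow> 0"
proof (rule ennreal_tendsto0I)
  fix e :: real assume e: "e > 0"
  define G where "G x = complex_of_real (B * indicator K x)" for x
  have Gm: "G \<in> borel_measurable lebesgue" unfolding G_def using K by measurable
  have Geq: "(\<lambda>x. ennreal (cmod (G x))) = (\<lambda>x. ennreal B * indicator K x)"
    using B by (auto simp: G_def indicator_def fun_eq_iff)
  have CK: "\<rho> (indicator K) < \<infinity>" using rho_ind[OF bfn K] .
  have GB: "in_BFS \<rho> G"
    unfolding in_BFS_def using Gm Geq rho_scale[OF bfn _ B, of "indicator K"] CK K
    by (auto simp: ennreal_mult_less_top)
  obtain c where c: "\<rho> (indicator K) = ennreal c" "c \<ge> 0"
    using CK by (cases "\<rho> (indicator K)") auto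
  define \<delta> where "\<delta> = e / (2 * (c + 1))"
  have \<delta>: "\<delta> > 0" using e c by (simp add: \<delta>_def)
  have \<delta>c: "\<delta> * c \<le> e / 2"
    using e c by (simp add: \<delta>_def field_simps)
  define E where "E n = {x. \<delta> < cmod (h n x)}" for n
  have Em: "E n \<in> sets lebesgue" for n
  proof -
    have "Measurable.pred lebesgue (\<lambda>x. \<delta> < cmod (h n x))" using hm[of n] by measurable
    then show ?thesis by (simp add: E_def pred_def)
  qed
  have Elim: "AE x in lebesgue. (\<lambda>n. indicator (E n) x :: real) \<longlonglongrightarrow> 0"
    using hl
  proof (rule AE_mp, intro AE_I2 impI)
    fix x assume "(\<lambda>n. h n x) \<longlonglongrightarrow> 0"
    then have "eventually (\<lambda>n. norm (h n x) < \<delta>) sequentially"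
      using \<delta> order_tendstoD(2)[OF tendsto_norm_zero[OF \<open>(\<lambda>n. h n x) \<longlonglongrightarrow> 0\<close>]] by simp
    then have "eventually (\<lambda>n. indicator (E n) x = (0::real)) sequentially"
      by eventually_elim (auto simp: E_def)
    then show "(\<lambda>n. indicator (E n) x :: real) \<longlonglongrightarrow> 0"
      by (rule tendsto_eventually)
  qed
  have acl: "(\<lambda>n. BFS_norm \<rho> (\<lambda>x. G x * indicator (E n) x)) \<longlonglongrightarrow> 0"
    using ac GB Em Elim unfolding abs_cont_norm_def by blast
  have "eventually (\<lambda>n. BFS_norm \<rho> (\<lambda>x. G x * indicator (E n) x) < ennreal (e/2)) sequentially"
    using e by (intro order_tendstoD(2)[OF acl]) auto
  then show "eventually (\<lambda>n. BFS_norm \<rho> (h n) \<le> ennreal e) sequentially"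
  proof eventually_elim
    case (elim n)
    have "BFS_norm \<rho> (h n) \<le> \<rho> (\<lambda>x. ennreal (cmod (G x * indicator (E n) x)) + ennreal \<delta> * indicator K x)"
      unfolding BFS_norm_def
    proof (rule rho_mono[OF bfn])
      fix x
      show "ennreal (cmod (h n x)) \<le> ennreal (cmod (G x * indicator (E n) x)) + ennreal \<delta> * indicator K x"
      proof (cases "x \<in> E n")
        case True
        then have "ennreal (cmod (h n x)) \<le> ennreal (cmod (G x * indicator (E n) x))"
          using hb[of n x] B by (intro ennreal_leI) (auto simp: G_def indicator_def)
        then show ?thesis by (rule order_trans) simp
      next
        case False
        then have "cmod (h n x) \<le> \<delta> * indicator K x"
          using hb[of n x] by (auto simp: E_def indicator_def)
        then have "ennreal (cmod (h n x)) \<le> ennreal \<delta> * indicator K x"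
          using \<delta> by (auto simp: indicator_def)
        then show ?thesis by (rule order_trans) simp
      qed
    qed (use hm Gm Em K in measurable)
    also have "\<dots> \<le> BFS_norm \<rho> (\<lambda>x. G x * indicator (E n) x) + ennreal \<delta> * \<rho> (indicator K)"
      unfolding BFS_norm_def
      using rho_add[OF bfn, of "\<lambda>x. ennreal (cmod (G x * indicator (E n) x))" "\<lambda>x. ennreal \<delta> * indicator K x"]
        rho_scale[OF bfn, of "indicator K" \<delta>] \<delta> Gm Em K by (simp add: measurable_compose)
    also have "\<dots> \<le> ennreal (e/2) + ennreal (e/2)"
    proof (rule add_mono)
      show "ennreal \<delta> * \<rho> (indicator K) \<le> ennreal (e/2)"
        using \<delta>c \<delta> c by (simp add: ennreal_mult[symmetric] ennreal_leI)
    qed (use elim in simp)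
    also have "\<dots> = ennreal e" using e by (simp add: ennreal_plus[symmetric] del: ennreal_plus)
    finally show ?case .
  qed
qed

lemma L2_dom:
  fixes h :: "nat \<Rightarrow> 'a::euclidean_space \<Rightarrow> complex"
  assumes hm: "\<And>n. h n \<in> borel_measurable lebesgue"
    and K: "K \<in> sets lebesgue" "emeasure lebesgue K < \<infinity>" and B: "B \<ge> 0"
    and hb: "\<And>n x. cmod (h n x) \<le> B * indicator K x"
    and hl: "AE x in lebesgue. (\<lambda>n. h n x) \<longlonglongrightarrow> 0"
  shows "(\<lambda>n. \<integral>x. (cmod (h n x))\<^sup>2 \<partial>lebesgue) \<longlonglongrightarrow> 0"
proof -
  have "(\<lambda>n. \<integral>x. (cmod (h n x))\<^sup>2 \<partial>lebesgue) \<longlonglongrightarrow> (\<integral>x. 0 \<partial>(lebesgue::'a measure))"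
  proof (rule Bochner_Integration.integral_dominated_convergence[where M=lebesgue and s="\<lambda>n x. (cmod (h n x))\<^sup>2" and f="\<lambda>x. 0" and w = "\<lambda>x. B\<^sup>2 * indicator K x"])
    show "(\<lambda>x. 0::real) \<in> borel_measurable lebesgue" by simp
    show "(\<lambda>x. (cmod (h i x))\<^sup>2) \<in> borel_measurable lebesgue" for i using hm[of i] by measurable
    show "integrable lebesgue (\<lambda>x. B\<^sup>2 * indicator K x)"
      using K by (intro integrable_mult_right integrable_real_indicator)
    show "AE x in lebesgue. (\<lambda>i. (cmod (h i x))\<^sup>2) \<longlonglongrightarrow> 0"
      using hl
    proof eventually_elim
      case (elim x)
      show ?case using tendsto_power[OF tendsto_norm[OF elim], of 2] by simp
    qed
    show "AE x in lebesgue. norm ((cmod (h i x))\<^sup>2) \<le> B\<^sup>2 * indicator K x" for i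
    proof (rule AE_I2)
      fix x
      have "(cmod (h i x))\<^sup>2 \<le> (B * indicator K x)\<^sup>2"
        using hb[of i x] by (intro power_mono) auto
      then show "norm ((cmod (h i x))\<^sup>2) \<le> B\<^sup>2 * indicator K x"
        by (auto simp: indicator_def power_mult_distrib)
    qed
  qed
  then show ?thesis by simp
qed

lemma trunc_lim:
  fixes u :: "'a::euclidean_space \<Rightarrow> complex"
  assumes ac: "abs_cont_norm \<rho>" and uL: "in_L2 u" and uX: "in_BFS \<rho> u"
  defines "E \<equiv> \<lambda>k::nat. {x. \<not> (norm x \<le> real k \<and> cmod (u x) \<le> real k)}"
  shows "(\<lambda>k. BFS_norm \<rho> (\<lambda>x. u x * indicator (E k) x)) \<longlonglongrightarrow> 0"
    and "(\<lambda>k. \<integral>x. (cmod (u x * indicator (E k) x))\<^sup>2 \<partial>lebesgue) \<longlonglongrightarrow> 0"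
    and "\<And>k. E k \<in> sets lebesgue"
proof -
  have um: "u \<in> borel_measurable lebesgue" using uL by (simp add: in_L2_def)
  show Em: "E k \<in> sets lebesgue" for k
  proof -
    have "Measurable.pred lebesgue (\<lambda>x. \<not> (norm x \<le> real k \<and> cmod (u x) \<le> real k))" using um by measurable
    then show ?thesis by (simp add: E_def pred_def)
  qed
  have ev: "eventually (\<lambda>k. indicator (E k) x = (0::'b::zero_neq_one)) sequentially" for x
  proof -
    obtain n :: nat where "max (norm x) (cmod (u x)) \<le> real n" using real_arch_simple by blast
    then show ?thesis unfolding eventually_sequentially
      by (intro exI[of _ n]) (auto simp: E_def indicator_def)
  qed
  have "(\<lambda>k. indicator (E k) x :: real) \<longlonglongrightarrow> 0" for x by (rule tendsto_eventually[OF ev])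
  then show "(\<lambda>k. BFS_norm \<rho> (\<lambda>x. u x * indicator (E k) x)) \<longlonglongrightarrow> 0"
    using ac uX Em unfolding abs_cont_norm_def by blast
  have "(\<lambda>k. \<integral>x. (cmod (u x * indicator (E k) x))\<^sup>2 \<partial>lebesgue) \<longlonglongrightarrow> (\<integral>x. 0 \<partial>(lebesgue::'a measure))"
  proof (rule Bochner_Integration.integral_dominated_convergence[where w = "\<lambda>x. (cmod (u x))\<^sup>2"])
    show "(\<lambda>x. 0::real) \<in> borel_measurable lebesgue" by simp
    show "(\<lambda>x. (cmod (u x * indicator (E i) x))\<^sup>2) \<in> borel_measurable lebesgue" for i
      using um Em[of i] by measurable
    show "integrable lebesgue (\<lambda>x. (cmod (u x))\<^sup>2)" using uL by (simp add: in_L2_def)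
    show "AE x in lebesgue. (\<lambda>i. (cmod (u x * indicator (E i) x))\<^sup>2) \<longlonglongrightarrow> 0"
    proof (rule AE_I2, rule tendsto_eventually)
      fix x show "eventually (\<lambda>i. (cmod (u x * indicator (E i) x))\<^sup>2 = 0) sequentially"
      proof -
        have "eventually (\<lambda>i. indicator (E i) x = (0::complex)) sequentially" by (rule ev)
        then show ?thesis by eventually_elim simp
      qed
    qed
    show "AE x in lebesgue. norm ((cmod (u x * indicator (E i) x))\<^sup>2) \<le> (cmod (u x))\<^sup>2" for i
      by (rule AE_I2) (auto simp: indicator_def)
  qed
  then show "(\<lambda>k. \<integral>x. (cmod (u x * indicator (E k) x))\<^sup>2 \<partial>lebesgue) \<longlonglongrightarrow> 0" by simp
qed

lemma L2_tri:
  fixes u f s :: "'a::euclidean_space \<Rightarrow> complex"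
  assumes m: "u \<in> borel_measurable lebesgue" "f \<in> borel_measurable lebesgue" "s \<in> borel_measurable lebesgue"
    and i1: "integrable lebesgue (\<lambda>x. (cmod (u x - f x))\<^sup>2)"
    and i2: "integrable lebesgue (\<lambda>x. (cmod (f x - s x))\<^sup>2)"
  shows "integrable lebesgue (\<lambda>x. (cmod (u x - s x))\<^sup>2)"
    and "(\<integral>x. (cmod (u x - s x))\<^sup>2 \<partial>lebesgue) \<le>
          2 * (\<integral>x. (cmod (u x - f x))\<^sup>2 \<partial>lebesgue) + 2 * (\<integral>x. (cmod (f x - s x))\<^sup>2 \<partial>lebesgue)"
proof -
  have pw: "(cmod (u x - s x))\<^sup>2 \<le> 2 * (cmod (u x - f x))\<^sup>2 + 2 * (cmod (f x - s x))\<^sup>2" for x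
  proof -
    have t: "cmod (u x - s x) \<le> cmod (u x - f x) + cmod (f x - s x)"
      using norm_triangle_ineq[of "u x - f x" "f x - s x"] by simp
    have "(cmod (u x - s x))\<^sup>2 \<le> (cmod (u x - f x) + cmod (f x - s x))\<^sup>2"
      using t by (intro power_mono) auto
    also have "\<dots> \<le> 2 * (cmod (u x - f x))\<^sup>2 + 2 * (cmod (f x - s x))\<^sup>2"
      using sum_squares_ge_zero[of "cmod (u x - f x) - cmod (f x - s x)" 0]
      by (simp add: power2_eq_square algebra_simps)
    finally show ?thesis .
  qed
  have iR: "integrable lebesgue (\<lambda>x. 2 * (cmod (u x - f x))\<^sup>2 + 2 * (cmod (f x - s x))\<^sup>2)"
    using i1 i2 by simp
  show iL: "integrable lebesgue (\<lambda>x. (cmod (u x - s x))\<^sup>2)"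
  proof (rule Bochner_Integration.integrable_bound[OF iR])
    show "(\<lambda>x. (cmod (u x - s x))\<^sup>2) \<in> borel_measurable lebesgue" using m by measurable
    show "AE x in lebesgue. norm ((cmod (u x - s x))\<^sup>2) \<le> norm (2 * (cmod (u x - f x))\<^sup>2 + 2 * (cmod (f x - s x))\<^sup>2)"
      using pw by (intro AE_I2) (simp add: abs_of_nonneg)
  qed
  have "(\<integral>x. (cmod (u x - s x))\<^sup>2 \<partial>lebesgue) \<le> (\<integral>x. 2 * (cmod (u x - f x))\<^sup>2 + 2 * (cmod (f x - s x))\<^sup>2 \<partial>lebesgue)"
    using iL iR pw by (intro integral_mono) auto
  also have "\<dots> = 2 * (\<integral>x. (cmod (u x - f x))\<^sup>2 \<partial>lebesgue) + 2 * (\<integral>x. (cmod (f x - s x))\<^sup>2 \<partial>lebesgue)"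
    using i1 i2 by simp
  finally show "(\<integral>x. (cmod (u x - s x))\<^sup>2 \<partial>lebesgue) \<le>
          2 * (\<integral>x. (cmod (u x - f x))\<^sup>2 \<partial>lebesgue) + 2 * (\<integral>x. (cmod (f x - s x))\<^sup>2 \<partial>lebesgue)" .
qed



lemma approx_bdd:
  fixes f :: "'a::euclidean_space \<Rightarrow> complex"
  assumes fm: "f \<in> borel_measurable lebesgue" and k: "k > 0"
    and fb: "\<And>x. cmod (f x) \<le> k" and fz: "\<And>x. k < norm x \<Longrightarrow> f x = 0"
  shows "\<exists>s. (\<forall>n. C0_inf (s n)) \<and>
    (\<forall>n x. cmod (s n x - f x) \<le> (3*k+1) * indicator (cball 0 (k+2)) x) \<and>
    (AE x in lebesgue. (\<lambda>n. s n x) \<longlonglongrightarrow> f x)"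
proof -
  have "UNIV \<in> sets lebesgue" by simp
  then have "f measurable_on UNIV" by (rule lebesgue_measurable_imp_measurable_on[OF fm])
  then obtain N g where N: "negligible N" and gc: "\<And>n. continuous_on UNIV (g n)"
    and gl: "\<And>x. x \<notin> N \<Longrightarrow> (\<lambda>n. g n x) \<longlonglongrightarrow> f x"
    unfolding measurable_on_def by auto
  define cl where "cl t = max (-k) (min k t)" for t
  define clip where "clip z = complex_of_real (cl (Re z)) + \<i> * complex_of_real (cl (Im z))" for z
  have ccl: "continuous_on UNIV clip"
    unfolding clip_def cl_def by (intro continuous_intros)
  have clip_id: "clip z = z" if "cmod z \<le> k" for z
  proof -
    have "\<bar>Re z\<bar> \<le> k" "\<bar>Im z\<bar> \<le> k" using abs_Re_le_cmod[of z] abs_Im_le_cmod[of z] that by auto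
    then have "cl (Re z) = Re z" "cl (Im z) = Im z" unfolding cl_def by auto
    then show ?thesis unfolding clip_def using complex_eq[of z] by simp
  qed
  have clip_bd: "cmod (clip z) \<le> 2 * k" for z
  proof -
    have a: "\<bar>cl t\<bar> \<le> k" for t unfolding cl_def using k by auto
    have "cmod (clip z) \<le> cmod (complex_of_real (cl (Re z))) + cmod (\<i> * complex_of_real (cl (Im z)))"
      unfolding clip_def by (rule norm_triangle_ineq)
    also have "\<dots> = \<bar>cl (Re z)\<bar> + \<bar>cl (Im z)\<bar>" by (simp add: norm_mult)
    also have "\<dots> \<le> 2 * k" using a[of "Re z"] a[of "Im z"] by simp
    finally show ?thesis .
  qed
  define \<eta> where "\<eta> x = max 0 (min 1 (k + 1 - norm x))" for x :: 'a
  have \<eta>01: "0 \<le> \<eta> x" "\<eta> x \<le> 1" for x unfolding \<eta>_def by auto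
  define c where "c n x = complex_of_real (\<eta> x) * clip (g n x)" for n x
  have cc: "continuous_on UNIV (c n)" for n
  proof -
    have "continuous_on UNIV (\<lambda>x. clip (g n x))"
      using continuous_on_compose2[OF ccl gc[of n]] by simp
    then show ?thesis unfolding c_def \<eta>_def by (intro continuous_intros)
  qed
  have c0: "c n x = 0" if "k + 1 \<le> norm x" for n x
    using that unfolding c_def \<eta>_def by auto
  have cb: "cmod (c n x) \<le> 2 * k" for n x
  proof -
    have "cmod (c n x) = \<eta> x * cmod (clip (g n x))" unfolding c_def using \<eta>01[of x] by (simp add: norm_mult)
    also have "\<dots> \<le> 1 * (2 * k)" using \<eta>01[of x] clip_bd[of "g n x"] by (intro mult_mono) auto
    finally show ?thesis by simp
  qed
  have "\<forall>n. \<exists>s. C0_inf s \<and> (\<forall>x. cmod (s x - c n x) \<le> inverse (real (Suc n))) \<and> (\<forall>x. k + 2 \<le> norm x \<longrightarrow> s x = 0)"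
  proof
    fix n
    show "\<exists>s. C0_inf s \<and> (\<forall>x. cmod (s x - c n x) \<le> inverse (real (Suc n))) \<and> (\<forall>x. k + 2 \<le> norm x \<longrightarrow> s x = 0)"
      by (rule smooth_approx[OF cc[of n], of "k+1"]) (use k c0 in auto)
  qed
  then obtain s where sC: "\<And>n. C0_inf (s n)" and sc: "\<And>n x. cmod (s n x - c n x) \<le> inverse (real (Suc n))"
    and sz: "\<And>n x. k + 2 \<le> norm x \<Longrightarrow> s n x = 0"
    by metis
  have bound: "cmod (s n x - f x) \<le> (3*k+1) * indicator (cball 0 (k+2)) x" for n x
  proof (cases "k + 2 \<le> norm x")
    case True
    then show ?thesis using sz[of x n] fz[of x] k by (simp add: indicator_def)
  next
    case False
    have "cmod (s n x - f x) \<le> cmod (s n x - c n x) + cmod (c n x) + cmod (f x)"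
      using norm_triangle_ineq4[of "s n x - c n x + c n x" "f x"] norm_triangle_ineq[of "s n x - c n x" "c n x"]
      by simp
    also have "\<dots> \<le> 1 + 2 * k + k"
    proof -
      have "inverse (real (Suc n)) \<le> 1" by (simp add: inverse_le_1_iff)
      then show ?thesis using sc[of n x] cb[of n x] fb[of x] by linarith
    qed
    finally show ?thesis using False by (simp add: indicator_def)
  qed
  have ae: "AE x in lebesgue. (\<lambda>n. s n x) \<longlonglongrightarrow> f x"
  proof -
    have "AE x in lebesgue. x \<notin> N" using N by (intro AE_not_in) (simp add: negligible_iff_null_sets)
    then show ?thesis
    proof eventually_elim
      case (elim x)
      have l1: "(\<lambda>n. clip (g n x)) \<longlonglongrightarrow> clip (f x)"
        using continuous_on_tendsto_compose[OF ccl gl[OF elim]] by simp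
      have ef: "complex_of_real (\<eta> x) * f x = f x"
      proof (cases "f x = 0")
        case False
        then have "norm x \<le> k" using fz[of x] by (meson not_le)
        then show ?thesis unfolding \<eta>_def by simp
      qed simp
      have l2: "(\<lambda>n. c n x) \<longlonglongrightarrow> f x"
        unfolding c_def using tendsto_mult[OF tendsto_const l1, of "complex_of_real (\<eta> x)"]
        by (simp add: clip_id[OF fb] ef)
      have l3: "(\<lambda>n. s n x - c n x) \<longlonglongrightarrow> 0"
      proof (rule tendsto_norm_zero_cancel, rule tendsto_sandwich[OF _ _ tendsto_const LIMSEQ_inverse_real_of_nat])
        show "\<forall>\<^sub>F n in sequentially. 0 \<le> norm (s n x - c n x)" by simp
        show "\<forall>\<^sub>F n in sequentially. norm (s n x - c n x) \<le> inverse (real (Suc n))" using sc by simp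
      qed
      show ?case using tendsto_add[OF l3 l2] by simp
    qed
  qed
  show ?thesis using sC bound ae by blast
qed

lemma sq_integrable_bound:
  fixes h :: "'a::euclidean_space \<Rightarrow> complex"
  assumes hm: "h \<in> borel_measurable lebesgue" and w: "integrable lebesgue w"
    and b: "\<And>x. (cmod (h x))\<^sup>2 \<le> w x"
  shows "integrable lebesgue (\<lambda>x. (cmod (h x))\<^sup>2)"
proof (rule Bochner_Integration.integrable_bound[OF w])
  show "(\<lambda>x. (cmod (h x))\<^sup>2) \<in> borel_measurable lebesgue" using hm by measurable
  show "AE x in lebesgue. norm ((cmod (h x))\<^sup>2) \<le> norm (w x)"
    using b by (intro AE_I2) (metis abs_ge_self order_trans real_norm_def zero_le_power2 abs_of_nonneg)
qed

lemma main_approx: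
  fixes \<rho> :: "('a::euclidean_space \<Rightarrow> ennreal) \<Rightarrow> ennreal" and u :: "'a \<Rightarrow> complex"
  assumes bfn: "banach_function_norm \<rho>" and ac: "abs_cont_norm \<rho>"
    and uL: "in_L2 u" and uX: "in_BFS \<rho> u" and e: "e > 0"
  shows "\<exists>g. C0_inf g \<and> (\<integral>x. (cmod (u x - g x))\<^sup>2 \<partial>lebesgue) < e \<and>
     BFS_norm \<rho> (\<lambda>x. u x - g x) < ennreal e"
proof -
  have um: "u \<in> borel_measurable lebesgue" using uL by (simp add: in_L2_def)
  define E where "E = (\<lambda>k::nat. {x. \<not> (norm x \<le> real k \<and> cmod (u x) \<le> real k)})"
  have tl1: "(\<lambda>k. BFS_norm \<rho> (\<lambda>x. u x * indicator (E k) x)) \<longlonglongrightarrow> 0"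
    using trunc_lim(1)[OF ac uL uX] by (simp add: E_def)
  have tl2: "(\<lambda>k. \<integral>x. (cmod (u x * indicator (E k) x))\<^sup>2 \<partial>lebesgue) \<longlonglongrightarrow> 0"
    using trunc_lim(2)[OF ac uL uX] by (simp add: E_def)
  have tl3: "\<And>k. E k \<in> sets lebesgue"
    using trunc_lim(3)[OF ac uL uX] by (simp add: E_def)
  have "eventually (\<lambda>k. BFS_norm \<rho> (\<lambda>x. u x * indicator (E k) x) < ennreal (e/2)) sequentially"
    using e by (intro order_tendstoD(2)[OF tl1]) auto
  moreover have "eventually (\<lambda>k. (\<integral>x. (cmod (u x * indicator (E k) x))\<^sup>2 \<partial>lebesgue) < e/4) sequentially"
    using e by (intro order_tendstoD(2)[OF tl2]) auto
  ultimately have "eventually (\<lambda>k. BFS_norm \<rho> (\<lambda>x. u x * indicator (E k) x) < ennreal (e/2) \<and>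
      (\<integral>x. (cmod (u x * indicator (E k) x))\<^sup>2 \<partial>lebesgue) < e/4) sequentially"
    by (rule eventually_conj)
  then obtain k where k1: "BFS_norm \<rho> (\<lambda>x. u x * indicator (E k) x) < ennreal (e/2)"
    and k2: "(\<integral>x. (cmod (u x * indicator (E k) x))\<^sup>2 \<partial>lebesgue) < e/4"
    unfolding eventually_sequentially by blast
  define f where "f x = u x - u x * indicator (E k) x" for x
  have Em: "E k \<in> sets lebesgue" using tl3 .
  have fm: "f \<in> borel_measurable lebesgue" unfolding f_def using um Em by measurable
  define kk where "kk = real k + 1"
  have kk: "kk > 0" unfolding kk_def by simp
  have fb: "cmod (f x) \<le> kk" for x
    unfolding f_def kk_def E_def by (auto simp: indicator_def)
  have fz: "f x = 0" if "kk < norm x" for x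
    using that unfolding f_def kk_def E_def by (auto simp: indicator_def)
  obtain s where sC: "\<And>n. C0_inf (s n)"
    and sb: "\<And>n x. cmod (s n x - f x) \<le> (3*kk+1) * indicator (cball 0 (kk+2)) x"
    and sl: "AE x in lebesgue. (\<lambda>n. s n x) \<longlonglongrightarrow> f x"
    using approx_bdd[OF fm kk fb fz] by blast
  have sm: "s n \<in> borel_measurable lebesgue" for n
  proof -
    have "smooth_fn (s n)" using sC[of n] by (simp add: C0_inf_def)
    then have "continuous_on UNIV (s n)" by (auto elim: smooth_fn.cases)
    then show ?thesis by (rule cont_meas)
  qed
  define h where "h n x = f x - s n x" for n x
  have hm: "h n \<in> borel_measurable lebesgue" for n unfolding h_def using fm sm[of n] by measurable
  have Kc: "cball (0::'a) (kk+2) \<in> sets lebesgue" "emeasure lebesgue (cball (0::'a) (kk+2)) < \<infinity>"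
    using emeasure_lborel_cball_finite[of "0::'a" "kk+2"] by auto
  have B: "3*kk+1 \<ge> 0" using kk by simp
  have hb: "cmod (h n x) \<le> (3*kk+1) * indicator (cball 0 (kk+2)) x" for n x
    unfolding h_def using sb[of n x] by (simp add: norm_minus_commute)
  have hl: "AE x in lebesgue. (\<lambda>n. h n x) \<longlonglongrightarrow> 0"
    using sl
  proof eventually_elim
    case (elim x) show ?case unfolding h_def using tendsto_diff[OF tendsto_const elim, of "f x"] by simp
  qed
  note l2 = L2_dom[OF hm Kc B hb hl]
  note lx = X_dom[OF bfn ac hm Kc B hb hl]
  have "eventually (\<lambda>n. BFS_norm \<rho> (h n) < ennreal (e/2)) sequentially"
    using e by (intro order_tendstoD(2)[OF lx]) auto
  moreover have "eventually (\<lambda>n. (\<integral>x. (cmod (h n x))\<^sup>2 \<partial>lebesgue) < e/4) sequentially"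
    using e by (intro order_tendstoD(2)[OF l2]) auto
  ultimately have "eventually (\<lambda>n. BFS_norm \<rho> (h n) < ennreal (e/2) \<and>
      (\<integral>x. (cmod (h n x))\<^sup>2 \<partial>lebesgue) < e/4) sequentially"
    by (rule eventually_conj)
  then obtain n where n1: "BFS_norm \<rho> (h n) < ennreal (e/2)"
    and n2: "(\<integral>x. (cmod (h n x))\<^sup>2 \<partial>lebesgue) < e/4"
    unfolding eventually_sequentially by blast
  have uf: "(\<lambda>x. u x - f x) = (\<lambda>x. u x * indicator (E k) x)" by (simp add: f_def fun_eq_iff)
  have i1: "integrable lebesgue (\<lambda>x. (cmod (u x - f x))\<^sup>2)"
  proof (rule sq_integrable_bound[where w = "\<lambda>x. (cmod (u x))\<^sup>2"])
    show "(\<lambda>x. u x - f x) \<in> borel_measurable lebesgue" using um fm by measurable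
    show "integrable lebesgue (\<lambda>x. (cmod (u x))\<^sup>2)" using uL by (simp add: in_L2_def)
    show "(cmod (u x - f x))\<^sup>2 \<le> (cmod (u x))\<^sup>2" for x
      by (simp add: f_def indicator_def)
  qed
  have i2: "integrable lebesgue (\<lambda>x. (cmod (f x - s n x))\<^sup>2)"
  proof (rule sq_integrable_bound[where w = "\<lambda>x. (3*kk+1)\<^sup>2 * indicator (cball 0 (kk+2)) x"])
    show "(\<lambda>x. f x - s n x) \<in> borel_measurable lebesgue" using fm sm[of n] by measurable
    show "integrable lebesgue (\<lambda>x. (3*kk+1)\<^sup>2 * indicator (cball (0::'a) (kk+2)) x)"
      using Kc by (intro integrable_mult_right integrable_real_indicator)
    fix x
    have "(cmod (f x - s n x))\<^sup>2 \<le> ((3*kk+1) * indicator (cball 0 (kk+2)) x)\<^sup>2"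
      using hb[of n x] by (intro power_mono) (auto simp: h_def)
    then show "(cmod (f x - s n x))\<^sup>2 \<le> (3*kk+1)\<^sup>2 * indicator (cball 0 (kk+2)) x"
      by (auto simp: indicator_def power_mult_distrib)
  qed
  note tri = L2_tri[OF um fm sm[of n] i1 i2]
  have "(\<integral>x. (cmod (u x - s n x))\<^sup>2 \<partial>lebesgue) < e"
  proof -
    have "(\<integral>x. (cmod (u x - f x))\<^sup>2 \<partial>lebesgue) < e/4" using k2 by (simp add: f_def)
    moreover have "(\<integral>x. (cmod (f x - s n x))\<^sup>2 \<partial>lebesgue) < e/4" using n2 by (simp add: h_def)
    ultimately show ?thesis using tri(2) by linarith
  qed
  moreover have "BFS_norm \<rho> (\<lambda>x. u x - s n x) < ennreal e"
  proof -
    have "(\<lambda>x. u x - s n x) = (\<lambda>x. (u x - f x) + h n x)"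
      by (simp add: h_def fun_eq_iff)
    then have "BFS_norm \<rho> (\<lambda>x. u x - s n x) = BFS_norm \<rho> (\<lambda>x. (u x - f x) + h n x)"
      by (rule arg_cong)
    also have "\<dots> \<le> BFS_norm \<rho> (\<lambda>x. u x - f x) + BFS_norm \<rho> (h n)"
    proof (rule BFS_tri[OF bfn _ hm[of n]])
      show "(\<lambda>x. u x - f x) \<in> borel_measurable lebesgue" using um fm by measurable
    qed
    also have "\<dots> < ennreal (e/2) + ennreal (e/2)"
    proof -
      have k1': "BFS_norm \<rho> (\<lambda>x. u x - f x) < ennreal (e/2)" using k1 by (subst uf)
      have "BFS_norm \<rho> (\<lambda>x. u x - f x) + BFS_norm \<rho> (h n) \<le> BFS_norm \<rho> (\<lambda>x. u x - f x) + ennreal (e/2)"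
        using n1 by (intro add_left_mono less_imp_le)
      also have "\<dots> < ennreal (e/2) + ennreal (e/2)"
      proof -
        have "ennreal (e/2) + BFS_norm \<rho> (\<lambda>x. u x - f x) < ennreal (e/2) + ennreal (e/2)"
          using k1' by (subst ennreal_add_left_cancel_less) simp
        then show ?thesis by (metis add.commute)
      qed
      finally show ?thesis .
    qed
    also have "\<dots> = ennreal e" using e by (simp add: ennreal_plus[symmetric] del: ennreal_plus)
    finally show ?thesis .
  qed
  ultimately show ?thesis using sC[of n] by blast
qed

theorem theorem2p3:
  fixes \<rho> :: "('a::euclidean_space \<Rightarrow> ennreal) \<Rightarrow> ennreal"
  assumes "banach_function_norm \<rho>"
    and "abs_cont_norm \<rho>"
  shows "bounded_L2_approx \<rho>"
  unfolding bounded_L2_approx_def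
proof (intro allI impI)
  fix u :: "'a \<Rightarrow> complex"
  assume "in_L2 u \<and> in_BFS \<rho> u"
  then have uL: "in_L2 u" and uX: "in_BFS \<rho> u" by auto
  have um: "u \<in> borel_measurable lebesgue" using uL by (simp add: in_L2_def)
  have "\<forall>j. \<exists>g. C0_inf g \<and> (\<integral>x. (cmod (u x - g x))\<^sup>2 \<partial>lebesgue) < inverse (real (Suc j)) \<and>
     BFS_norm \<rho> (\<lambda>x. u x - g x) < ennreal (inverse (real (Suc j)))"
    by (intro allI main_approx[OF assms uL uX]) simp
  then obtain U where UC: "\<And>j. C0_inf (U j)"
    and U2: "\<And>j. (\<integral>x. (cmod (u x - U j x))\<^sup>2 \<partial>lebesgue) < inverse (real (Suc j))"
    and UX: "\<And>j. BFS_norm \<rho> (\<lambda>x. u x - U j x) < ennreal (inverse (real (Suc j)))"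
    by metis
  have Um: "U j \<in> borel_measurable lebesgue" for j
  proof -
    have "smooth_fn (U j)" using UC[of j] by (simp add: C0_inf_def)
    then have "continuous_on UNIV (U j)" by (auto elim: smooth_fn.cases)
    then show ?thesis by (rule cont_meas)
  qed
  have L: "(\<lambda>j. L2_norm (\<lambda>x. u x - U j x)) \<longlonglongrightarrow> 0"
  proof (rule tendsto_sandwich[OF _ _ tendsto_const])
    have lim: "(\<lambda>j. sqrt (inverse (real (Suc j)))) \<longlonglongrightarrow> sqrt 0"
      by (rule tendsto_real_sqrt[OF LIMSEQ_inverse_real_of_nat])
    then show "(\<lambda>j. sqrt (inverse (real (Suc j)))) \<longlonglongrightarrow> 0" by simp
    have nn: "0 \<le> (\<integral>x. (cmod (u x - U j x))\<^sup>2 \<partial>lebesgue)" for j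
      by (rule Bochner_Integration.integral_nonneg) simp
    show "\<forall>\<^sub>F j in sequentially. 0 \<le> L2_norm (\<lambda>x. u x - U j x)"
      using nn by (simp add: L2_norm_def)
    show "\<forall>\<^sub>F j in sequentially. L2_norm (\<lambda>x. u x - U j x) \<le> sqrt (inverse (real (Suc j)))"
      using U2 by (simp add: L2_norm_def less_imp_le)
  qed
  have bd: "BFS_norm \<rho> (U j) \<le> BFS_norm \<rho> u + ennreal (inverse (real (Suc j)))" for j
  proof -
    have "BFS_norm \<rho> (U j) = BFS_norm \<rho> (\<lambda>x. u x + (U j x - u x))" by simp
    also have "\<dots> \<le> BFS_norm \<rho> u + BFS_norm \<rho> (\<lambda>x. U j x - u x)"
      using BFS_tri[OF assms(1), of u "\<lambda>x. U j x - u x"] um Um[of j] by (simp add: borel_measurable_diff)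
    also have "BFS_norm \<rho> (\<lambda>x. U j x - u x) = BFS_norm \<rho> (\<lambda>x. u x - U j x)"
      by (simp add: BFS_norm_def norm_minus_commute)
    also have "BFS_norm \<rho> u + \<dots> \<le> BFS_norm \<rho> u + ennreal (inverse (real (Suc j)))"
      using UX[of j] by (intro add_left_mono less_imp_le)
    finally show ?thesis .
  qed
  have "limsup (\<lambda>j. BFS_norm \<rho> (U j)) \<le> limsup (\<lambda>j. BFS_norm \<rho> u + ennreal (inverse (real (Suc j))))"
    using bd by (intro Limsup_mono always_eventually) auto
  also have "limsup (\<lambda>j. BFS_norm \<rho> u + ennreal (inverse (real (Suc j)))) = BFS_norm \<rho> u + ennreal 0"
    by (intro lim_imp_Limsup trivial_limit_sequentially tendsto_add tendsto_const
        tendsto_ennrealI LIMSEQ_inverse_real_of_nat)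
  finally have "limsup (\<lambda>j. BFS_norm \<rho> (U j)) \<le> BFS_norm \<rho> u" by simp
  then show "\<exists>U. (\<forall>j. C0_inf (U j)) \<and> (\<lambda>j. L2_norm (\<lambda>x. u x - U j x)) \<longlonglongrightarrow> 0 \<and>
      limsup (\<lambda>j. BFS_norm \<rho> (U j)) \<le> BFS_norm \<rho> u"
    using UC L by blast
qed


end
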